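(* In the oracle setting below with $K=2$ populations (sizes $n_1,n_2$, $n=n_1+n_2$), run Algorithm BS* on $\mathcal D$. (a) In the first iteration, transferring an observation from population 1 to $C_1$ maximizes $d_w^*(C_1^{(1)},C_2^{(1)})$ if and only if $n_1\le n_2$. Furthermore, if $n_1\le n_2$ and an observation of population 1 is transferred in the first iteration, then in each of the first $n_1$ iterations an observation of population 1 is transferred to $C_1$, and $r\mapsto d_w^*(C_1^{(r)},C_2^{(r)})$ is increasing for $r=1,\dots,n_1$. (b) Under the conditions of (a), $r\mapsto d_w^*(C_1^{(r)},C_2^{(r)})$ is decreasing for $r\ge n_1$.
   Context: Let $k$ be a characteristic kernel on a separable metric space $\mathcal X$ and, for Borel probability measures $P,Q$, $d(P,Q)=\iint k\,dP\,dP+\iint k\,dQ\,dQ-2\iint k\,dP\,dQ$ (squared MMD). Oracle setting: $\mathcal D=\mathcal D_1\cup\dots\cup\mathcal D_K$ (disjoint), $\mathcal D_i$ the $n_i$ observations from population $i$, $\widehat P_i$ the empirical distribution of $\mathcal D_i$, the $\widehat P_i$ being pairwise distinct. For nonempty $S\subseteq\mathcal D$ with $m_i=|S\cap\mathcal D_i|$, $\widetilde P_S=\sum_i\frac{m_i}{|S|}\widehat P_i$; for disjoint nonempty $S_1,S_2$, $d_w^*(S_1,S_2)=\frac{|S_1||S_2|}{|S_1|+|S_2|}d(\widetilde P_{S_1},\widetilde P_{S_2})$. Algorithm BS* on $\mathcal E$: $C_1^{(0)}=\emptyset$, $C_2^{(0)}=\mathcal E$; for $r=1,\dots,|\mathcal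 E|-1$ choose $c\in C_2^{(r-1)}$ maximizing $d_w^*(C_1^{(r-1)}\cup\{c\},C_2^{(r-1)}\setminus\{c\})$ and set $C_1^{(r)}=C_1^{(r-1)}\cup\{c\}$, $C_2^{(r)}=C_2^{(r-1)}\setminus\{c\}$. "An observation from population $i$ is transferred at iteration $r$" means the chosen $c$ lies in $\mathcal D_i$. *)

theory Defs
  imports "HOL-Probability.Probability"
begin

definition mmd2 :: "('x \<Rightarrow> 'x \<Rightarrow> real) \<Rightarrow> 'x measure \<Rightarrow> 'x measure \<Rightarrow> real" where
  "mmd2 k P Q =
     integral\<^sup>L P (\<lambda>x. integral\<^sup>L P (\<lambda>y. k x y))
   + integral\<^sup>L Q (\<lambda>x. integral\<^sup>L Q (\<lambda>y. k x y))
   - 2 * integral\<^sup>L P (\<lambda>x. integral\<^sup>L Q (\<lambda>y. k x y))"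

definition pd_kernel :: "('x::topological_space \<Rightarrow> 'x \<Rightarrow> real) \<Rightarrow> bool" where
  "pd_kernel k \<longleftrightarrow>
     (\<forall>x y. k x y = k y x)
   \<and> (\<forall>(n::nat) (c::nat \<Rightarrow> real) (z::nat \<Rightarrow> 'x).
         0 \<le> (\<Sum>i<n. \<Sum>j<n. c i * c j * k (z i) (z j)))
   \<and> (\<exists>B. \<forall>x y. \<bar>k x y\<bar> \<le> B)
   \<and> case_prod k \<in> borel_measurable (borel \<Otimes>\<^sub>M borel)"

definition characteristic_kernel :: "('x::topological_space \<Rightarrow> 'x \<Rightarrow> real) \<Rightarrow> bool" where
  "characteristic_kernel k \<longleftrightarrow> pd_kernel k \<and>
     (\<forall>P Q. prob_space P \<longrightarrow> prob_space Q \<longrightarrow> sets P = sets borel \<longrightarrow> sets Q = sets borel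
        \<longrightarrow> mmd2 k P Q = 0 \<longrightarrow> P = Q)"

text \<open>Observations are indexed by elements of type 'o; X o is the value of observation o.
  Population i (i = 1..K) consists of the observations D i.\<close>

definition emp_dist :: "('o \<Rightarrow> 'x::topological_space) \<Rightarrow> 'o set \<Rightarrow> 'x measure" where
  "emp_dist X A = distr (uniform_count_measure A) borel X"

text \<open>Oracle mixture  P~_S = sum_i (m_i/|S|) P^_i  with m_i = |S inter D_i|,
  written as the Borel image of a weighted point measure on the observations.\<close>
definition oracle_mix :: "nat \<Rightarrow> (nat \<Rightarrow> 'o set) \<Rightarrow> ('o \<Rightarrow> 'x::topological_space) \<Rightarrow> 'o set \<Rightarrow> 'x measure" where
  "oracle_mix K D X S = distr
     (point_measure (\<Union>i\<in>{1..K}. D i)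
        (\<lambda>ob. ennreal (\<Sum>i\<in>{1..K}. if ob \<in> D i
              then real (card (S \<inter> D i)) / (real (card S) * real (card (D i))) else 0)))
     borel X"

definition dw_star :: "('x::topological_space \<Rightarrow> 'x \<Rightarrow> real) \<Rightarrow> nat \<Rightarrow> (nat \<Rightarrow> 'o set) \<Rightarrow> ('o \<Rightarrow> 'x)
    \<Rightarrow> 'o set \<Rightarrow> 'o set \<Rightarrow> real" where
  "dw_star k K D X S1 S2 =
     real (card S1) * real (card S2) / (real (card S1) + real (card S2))
     * mmd2 k (oracle_mix K D X S1) (oracle_mix K D X S2)"

text \<open>C1 is a run of BS* on E with split criterion dw: C1 r = C_1^{(r)}, and
  C_2^{(r)} = E - C1 r, for r = 0..|E|-1. Ties may be broken arbitrarily.\<close>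
definition BS_run :: "('o set \<Rightarrow> 'o set \<Rightarrow> real) \<Rightarrow> 'o set \<Rightarrow> (nat \<Rightarrow> 'o set) \<Rightarrow> bool" where
  "BS_run dw E C1 \<longleftrightarrow> C1 0 = {} \<and>
     (\<forall>r\<in>{1..card E - 1}. \<exists>c\<in>E - C1 (r - 1).
        C1 r = insert c (C1 (r - 1)) \<and>
        (\<forall>c'\<in>E - C1 (r - 1).
           dw (insert c' (C1 (r - 1))) (E - insert c' (C1 (r - 1)))
           \<le> dw (insert c (C1 (r - 1))) (E - insert c (C1 (r - 1)))))"

definition transferred_from :: "(nat \<Rightarrow> 'o set) \<Rightarrow> nat \<Rightarrow> 'o set \<Rightarrow> bool" where
  "transferred_from C1 r A \<longleftrightarrow> (\<exists>c\<in>A. C1 r - C1 (r - 1) = {c})"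

end

theory Submission
  imports Defs
begin

lemma pd_meas:
  assumes "pd_kernel k"
  shows "k x \<in> borel_measurable borel" "(\<lambda>y. k y x) \<in> borel_measurable borel"
proof -
  have m: "case_prod k \<in> borel_measurable (borel \<Otimes>\<^sub>M borel)" using assms unfolding pd_kernel_def by blast
  have "(\<lambda>y. case_prod k (x, y)) \<in> borel_measurable borel"
    by (rule measurable_compose[OF measurable_Pair1' m]) simp
  then show "k x \<in> borel_measurable borel" by simp
  have "(\<lambda>y. case_prod k (y, x)) \<in> borel_measurable borel"
    by (rule measurable_compose[OF measurable_Pair2' m]) simp
  then show "(\<lambda>y. k y x) \<in> borel_measurable borel" by simp
qed

lemma int_pm:
  fixes g :: "'x::{metric_space,second_countable_topology} \<Rightarrow> real"
  assumes "finite A" "\<And>a. a \<in> A \<Longrightarrow> 0 \<le> w a" "g \<in> borel_measurable borel"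
  shows "integral\<^sup>L (distr (point_measure A (\<lambda>a. ennreal (w a))) borel X) g = (\<Sum>a\<in>A. w a * g (X a))"
proof -
  have "integral\<^sup>L (distr (point_measure A (\<lambda>a. ennreal (w a))) borel X) g
      = integral\<^sup>L (point_measure A (\<lambda>a. ennreal (w a))) (\<lambda>a. g (X a))"
    by (rule integral_distr) (use assms in auto)
  also have "\<dots> = (\<Sum>a\<in>A. w a * g (X a))"
    by (subst lebesgue_integral_point_measure_finite) (use assms in auto)
  finally show ?thesis .
qed

lemma int_emp:
  fixes g :: "'x::{metric_space,second_countable_topology} \<Rightarrow> real"
  assumes "finite A" "g \<in> borel_measurable borel"
  shows "integral\<^sup>L (emp_dist X A) g = (\<Sum>a\<in>A. g (X a)) / card A"
proof -
  have "integral\<^sup>L (emp_dist X A) g = integral\<^sup>L (uniform_count_measure A) (\<lambda>a. g (X a))"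
    unfolding emp_dist_def
    by (rule integral_distr) (use assms in \<open>auto simp: uniform_count_measure_def\<close>)
  also have "\<dots> = (\<Sum>a\<in>A. g (X a)) / card A"
    by (rule integral_uniform_count_measure) (rule assms)
  finally show ?thesis .
qed

lemma mmd_pm:
  fixes k :: "'x::{metric_space,second_countable_topology} \<Rightarrow> 'x \<Rightarrow> real"
  assumes pd: "pd_kernel k" and A: "finite A" "\<And>a. a \<in> A \<Longrightarrow> 0 \<le> w a"
    and B: "finite B" "\<And>a. a \<in> B \<Longrightarrow> 0 \<le> v a"
  shows "mmd2 k (distr (point_measure A (\<lambda>a. ennreal (w a))) borel X)
                (distr (point_measure B (\<lambda>a. ennreal (v a))) borel X)
       = (\<Sum>x\<in>A. w x * (\<Sum>y\<in>A. w y * k (X x) (X y)))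
       + (\<Sum>x\<in>B. v x * (\<Sum>y\<in>B. v y * k (X x) (X y)))
       - 2 * (\<Sum>x\<in>A. w x * (\<Sum>y\<in>B. v y * k (X x) (X y)))"
proof -
  have mA: "\<And>x. integral\<^sup>L (distr (point_measure A (\<lambda>a. ennreal (w a))) borel X) (\<lambda>y. k x y)
     = (\<Sum>y\<in>A. w y * k x (X y))"
    by (rule int_pm) (use A pd_meas[OF pd] in auto)
  have mB: "\<And>x. integral\<^sup>L (distr (point_measure B (\<lambda>a. ennreal (v a))) borel X) (\<lambda>y. k x y)
     = (\<Sum>y\<in>B. v y * k x (X y))"
    by (rule int_pm) (use B pd_meas[OF pd] in auto)
  have ms: "\<And>C c. (\<lambda>x. \<Sum>y\<in>C. c y * k x (X y)) \<in> borel_measurable borel"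
    by (intro borel_measurable_sum borel_measurable_times borel_measurable_const pd_meas(2)[OF pd])
  show ?thesis
    unfolding mmd2_def mA mB
    by (subst int_pm, use A B ms in auto)+
qed

lemma mmd_emp:
  fixes k :: "'x::{metric_space,second_countable_topology} \<Rightarrow> 'x \<Rightarrow> real"
  assumes pd: "pd_kernel k" and A: "finite A" and B: "finite B"
  shows "mmd2 k (emp_dist X A) (emp_dist X B)
       = (\<Sum>x\<in>A. (\<Sum>y\<in>A. k (X x) (X y))) / card A / card A
       + (\<Sum>x\<in>B. (\<Sum>y\<in>B. k (X x) (X y))) / card B / card B
       - 2 * ((\<Sum>x\<in>A. (\<Sum>y\<in>B. k (X x) (X y))) / card A / card B)"
proof -
  have mA: "\<And>x. integral\<^sup>L (emp_dist X A) (\<lambda>y. k x y) = (\<Sum>y\<in>A. k x (X y)) / card A"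
    by (rule int_emp) (use A pd_meas[OF pd] in auto)
  have mB: "\<And>x. integral\<^sup>L (emp_dist X B) (\<lambda>y. k x y) = (\<Sum>y\<in>B. k x (X y)) / card B"
    by (rule int_emp) (use B pd_meas[OF pd] in auto)
  have ms: "\<And>C c. (\<lambda>x. (\<Sum>y\<in>C. k x (X y)) / c) \<in> borel_measurable borel"
    by (intro borel_measurable_divide borel_measurable_sum borel_measurable_const pd_meas(2)[OF pd])
  show ?thesis
    unfolding mmd2_def mA mB
    by (subst int_emp, use A B ms in \<open>auto simp: sum_divide_distrib mult.commute\<close>)+
qed

definition wgt :: "'o set \<Rightarrow> 'o set \<Rightarrow> real \<Rightarrow> real \<Rightarrow> 'o \<Rightarrow> real" where
  "wgt A B \<alpha> \<beta> x = (if x \<in> A then \<alpha> else if x \<in> B then \<beta> else 0)"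

lemma wgt_sum:
  assumes "finite A" "finite B" "A \<inter> B = {}"
  shows "(\<Sum>x\<in>A \<union> B. wgt A B \<alpha> \<beta> x * f x) = \<alpha> * sum f A + \<beta> * sum f B"
proof -
  have "(\<Sum>x\<in>A \<union> B. wgt A B \<alpha> \<beta> x * f x) = (\<Sum>x\<in>A. wgt A B \<alpha> \<beta> x * f x) + (\<Sum>x\<in>B. wgt A B \<alpha> \<beta> x * f x)"
    by (rule sum.union_disjoint) (use assms in auto)
  also have "(\<Sum>x\<in>A. wgt A B \<alpha> \<beta> x * f x) = (\<Sum>x\<in>A. \<alpha> * f x)"
    by (rule sum.cong) (auto simp: wgt_def)
  also have "(\<Sum>x\<in>B. wgt A B \<alpha> \<beta> x * f x) = (\<Sum>x\<in>B. \<beta> * f x)"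
    by (rule sum.cong) (use assms in \<open>auto simp: wgt_def\<close>)
  finally show ?thesis by (simp add: sum_distrib_left)
qed

lemma wgt_bil:
  assumes "finite A" "finite B" "A \<inter> B = {}"
  shows "(\<Sum>x\<in>A \<union> B. wgt A B \<alpha> \<beta> x * (\<Sum>y\<in>A \<union> B. wgt A B \<alpha>' \<beta>' y * k (X x) (X y)))
    = \<alpha> * \<alpha>' * (\<Sum>x\<in>A. \<Sum>y\<in>A. k (X x) (X y)) + \<alpha> * \<beta>' * (\<Sum>x\<in>A. \<Sum>y\<in>B. k (X x) (X y))
    + \<beta> * \<alpha>' * (\<Sum>x\<in>B. \<Sum>y\<in>A. k (X x) (X y)) + \<beta> * \<beta>' * (\<Sum>x\<in>B. \<Sum>y\<in>B. k (X x) (X y))"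
proof -
  have i: "\<And>x. (\<Sum>y\<in>A \<union> B. wgt A B \<alpha>' \<beta>' y * k (X x) (X y))
     = \<alpha>' * (\<Sum>y\<in>A. k (X x) (X y)) + \<beta>' * (\<Sum>y\<in>B. k (X x) (X y))"
    using wgt_sum[OF assms] .
  have o: "(\<Sum>x\<in>A \<union> B. wgt A B \<alpha> \<beta> x * (\<alpha>' * (\<Sum>y\<in>A. k (X x) (X y)) + \<beta>' * (\<Sum>y\<in>B. k (X x) (X y))))
     = \<alpha> * (\<Sum>x\<in>A. \<alpha>' * (\<Sum>y\<in>A. k (X x) (X y)) + \<beta>' * (\<Sum>y\<in>B. k (X x) (X y)))
     + \<beta> * (\<Sum>x\<in>B. \<alpha>' * (\<Sum>y\<in>A. k (X x) (X y)) + \<beta>' * (\<Sum>y\<in>B. k (X x) (X y)))"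
    using wgt_sum[OF assms] .
  show ?thesis unfolding i o sum.distrib sum_distrib_left[symmetric] by (simp only: algebra_simps)
qed

lemma bs_step:
  assumes "BS_run dw E C1" "r \<in> {1..card E - 1}"
  obtains c where "c \<in> E - C1 (r - 1)" "C1 r = insert c (C1 (r - 1))"
    "\<And>c'. c' \<in> E - C1 (r - 1) \<Longrightarrow>
           dw (insert c' (C1 (r - 1))) (E - insert c' (C1 (r - 1)))
           \<le> dw (insert c (C1 (r - 1))) (E - insert c (C1 (r - 1)))"
proof -
  have "\<forall>r\<in>{1..card E - 1}. \<exists>c\<in>E - C1 (r - 1).
        C1 r = insert c (C1 (r - 1)) \<and>
        (\<forall>c'\<in>E - C1 (r - 1).
           dw (insert c' (C1 (r - 1))) (E - insert c' (C1 (r - 1)))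
           \<le> dw (insert c (C1 (r - 1))) (E - insert c (C1 (r - 1))))"
    using assms(1) unfolding BS_run_def by (rule conjunct2)
  then have "\<exists>c\<in>E - C1 (r - 1).
        C1 r = insert c (C1 (r - 1)) \<and>
        (\<forall>c'\<in>E - C1 (r - 1).
           dw (insert c' (C1 (r - 1))) (E - insert c' (C1 (r - 1)))
           \<le> dw (insert c (C1 (r - 1))) (E - insert c (C1 (r - 1))))"
    using assms(2) by (rule bspec)
  then obtain c where "c \<in> E - C1 (r - 1)" "C1 r = insert c (C1 (r - 1))"
     "\<forall>c'\<in>E - C1 (r - 1).
           dw (insert c' (C1 (r - 1))) (E - insert c' (C1 (r - 1)))
           \<le> dw (insert c (C1 (r - 1))) (E - insert c (C1 (r - 1)))" by blast
  then show thesis using that by blast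
qed

lemma bs_basic:
  assumes "BS_run dw E C1" "finite E"
  shows "r \<le> card E - 1 \<Longrightarrow> C1 r \<subseteq> E \<and> card (C1 r) = r"
proof (induction r)
  case 0
  then show ?case using assms unfolding BS_run_def by simp
next
  case (Suc r)
  then have "Suc r \<in> {1..card E - 1}" by simp
  then obtain c where c: "c \<in> E - C1 r" "C1 (Suc r) = insert c (C1 r)"
    using bs_step[OF assms(1)] by (metis diff_Suc_1)
  have "C1 r \<subseteq> E" "card (C1 r) = r" using Suc by auto
  moreover have "finite (C1 r)" using \<open>C1 r \<subseteq> E\<close> assms(2) finite_subset by blast
  ultimately show ?case using c by auto
qed

lemma bs_mono:
  assumes "BS_run dw E C1" "finite E"
  shows "r \<le> r' \<Longrightarrow> r' \<le> card E - 1 \<Longrightarrow> C1 r \<subseteq> C1 r'"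
proof (induction r')
  case 0
  then show ?case by simp
next
  case (Suc r')
  show ?case
  proof (cases "r \<le> r'")
    case True
    have "Suc r' \<in> {1..card E - 1}" using Suc by simp
    then obtain c where "C1 (Suc r') = insert c (C1 r')"
      using bs_step[OF assms(1)] by (metis diff_Suc_1)
    then show ?thesis using Suc True by auto
  next
    case False
    then show ?thesis using Suc by (simp add: le_Suc_eq)
  qed
qed


lemma aux1: fixes s t N a2 d :: real assumes "t \<noteq> 0"
  shows "s * t/N * (a2/t)^2 * d = s * a2^2/(N * t) * d"
  using assms by (simp add: field_simps power2_eq_square)
lemma aux2: fixes a b N v d :: real assumes "b \<noteq> 0" "a \<noteq> 0"
  shows "a * b / N * (v / (a * b))^2 * d = v^2 / (N * a * b) * d"
  using assms by (simp add: field_simps power2_eq_square)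
lemma G_rr: fixes s N a1 a2 d :: real assumes "0<s" "s<N" "a1 = N - a2"
  shows "s * (N-s)/N * (s/s - (a1-s)/(N-s))^2 * d = s * a2^2/(N * (N-s)) * d"
proof -
  have ns: "N - s > 0" using assms by simp
  have "s/s - (a1-s)/(N-s) = a2/(N-s)" unfolding assms(3) using assms(1,2) ns by (simp add: field_simps)
  moreover have "s * (N-s)/N * (a2/(N-s))^2 * d = s * a2^2/(N * (N-s)) * d"
    using ns by (intro aux1) simp
  ultimately show ?thesis by simp
qed
lemma G_r1: fixes s N a1 a2 d :: real assumes "0<s" "s<N" "a1 = N - a2"
  shows "s * (N-s)/N * ((s-1)/s - (a1-(s-1))/(N-s))^2 * d = (s * a2-N)^2/(N * s * (N-s)) * d"
proof -
  have ns: "N - s > 0" using assms by simp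
  have "(s-1)/s - (a1-(s-1))/(N-s) = (s * a2-N)/(s * (N-s))" unfolding assms(3) using assms(1,2) ns by (simp add: field_simps)
  moreover have "s * (N-s)/N * ((s * a2-N)/(s * (N-s)))^2 * d = (s * a2-N)^2/(N * s * (N-s)) * d"
    using ns assms(1) by (intro aux2) auto
  ultimately show ?thesis by simp
qed
lemma G_n1: fixes s N a1 d :: real assumes "0<s" "s<N"
  shows "s * (N-s)/N * (a1/s - (a1-a1)/(N-s))^2 * d = a1^2 * (N-s)/(N * s) * d"
  using assms by (simp add: field_simps power2_eq_square)
lemma inc: fixes r r' N a2 d :: real assumes "0<r" "r<r'" "r'<N" "0<a2" "0<d"
  shows "r * a2^2/(N * (N-r)) * d < r'*a2^2/(N * (N-r')) * d"
proof -
  have "r/(N-r) < r'/(N-r')" using assms by (simp add: field_simps)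
  then have "r/(N-r) * (a2^2/N * d) < r'/(N-r') * (a2^2/N * d)"
    using assms by (intro mult_strict_right_mono) auto
  then show ?thesis by (simp add: field_simps)
qed
lemma dec: fixes r r' N a1 d :: real assumes "0<r" "r<r'" "r'<N" "0<a1" "0<d"
  shows "a1^2 * (N-r')/(N * r') * d < a1^2 * (N-r)/(N * r) * d"
proof -
  have "(N-r')/r' < (N-r)/r" using assms by (simp add: field_simps)
  then have "(N-r')/r' * (a1^2/N * d) < (N-r)/r * (a1^2/N * d)"
    using assms by (intro mult_strict_right_mono) auto
  then show ?thesis by (simp add: field_simps)
qed
lemma stp: fixes r N a2 d :: real assumes "0<r" "r<N" "0<d" "0 < N" "N < 2 * r * a2"
  shows "(r * a2-N)^2/(N * r * (N-r)) * d < r * a2^2/(N * (N-r)) * d"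
proof -
  have "(r * a2-N)^2 < (r * a2)^2" using assms by (simp add: power2_eq_square algebra_simps)
  then have "(r * a2-N)^2 * (d/(N * r * (N-r))) < (r * a2)^2 * (d/(N * r * (N-r)))"
    using assms by (intro mult_strict_right_mono) auto
  moreover have "(r * a2-N)^2/(N * r * (N-r)) * d = (r * a2-N)^2 * (d/(N * r * (N-r)))" by simp
  moreover have "r * a2^2/(N * (N-r)) * d = (r * a2)^2 * (d/(N * r * (N-r)))"
    using assms by (simp add: field_simps power2_eq_square)
  ultimately show ?thesis by simp
qed

lemma emp_ps:
  assumes "finite A" "A \<noteq> {}"
  shows "prob_space (emp_dist X A)" "sets (emp_dist X A) = sets borel"
proof -
  show "prob_space (emp_dist X A)" unfolding emp_dist_def
    by (rule prob_space.prob_space_distr[OF prob_space_uniform_count_measure[OF assms]])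
       (auto simp: uniform_count_measure_def)
  show "sets (emp_dist X A) = sets borel" unfolding emp_dist_def by simp
qed

theorem lemma1:
  fixes k :: "'x::{metric_space, second_countable_topology} \<Rightarrow> 'x \<Rightarrow> real"
    and D :: "nat \<Rightarrow> 'o set" and X :: "'o \<Rightarrow> 'x"
  assumes char: "characteristic_kernel k"
    and fin: "finite (D 1)" "finite (D 2)"
    and ne: "D 1 \<noteq> {}" "D 2 \<noteq> {}"
    and disj: "D 1 \<inter> D 2 = {}"
    and distinct: "emp_dist X (D 1) \<noteq> emp_dist X (D 2)"
  defines "n1 \<equiv> card (D 1)" and "n2 \<equiv> card (D 2)" and "DD \<equiv> D 1 \<union> D 2"
    and "dw \<equiv> dw_star k 2 D X"
  shows
    "((\<exists>c\<in>D 1. \<forall>c'\<in>DD. dw {c'} (DD - {c'}) \<le> dw {c} (DD - {c})) \<longleftrightarrow> n1 \<le> n2)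
   \<and> (\<forall>C1. BS_run dw DD C1 \<longrightarrow> n1 \<le> n2 \<longrightarrow> transferred_from C1 1 (D 1) \<longrightarrow>
        (\<forall>r\<in>{1..n1}. transferred_from C1 r (D 1))
      \<and> (\<forall>r\<in>{1..n1}. \<forall>r'\<in>{1..n1}. r < r' \<longrightarrow>
            dw (C1 r) (DD - C1 r) < dw (C1 r') (DD - C1 r'))
      \<and> (\<forall>r\<in>{n1..card DD - 1}. \<forall>r'\<in>{n1..card DD - 1}. r < r' \<longrightarrow>
            dw (C1 r') (DD - C1 r') < dw (C1 r) (DD - C1 r)))"
  proof -
  have pd: "pd_kernel k" using char unfolding characteristic_kernel_def by blast
  have symk: "\<And>x y. k x y = k y x" using pd unfolding pd_kernel_def by blast
  have finDD: "finite DD" unfolding DD_def using fin by simp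
  have n1p: "0 < n1" unfolding n1_def using fin(1) ne(1) by (simp add: card_gt_0_iff)
  have n2p: "0 < n2" unfolding n2_def using fin(2) ne(2) by (simp add: card_gt_0_iff)
  have cardDD: "card DD = n1 + n2" unfolding DD_def n1_def n2_def using card_Un_disjoint[OF fin disj] .
  define N where "N = real n1 + real n2"
  define K11 where "K11 = (\<Sum>x\<in>D 1. \<Sum>y\<in>D 1. k (X x) (X y))"
  define K12 where "K12 = (\<Sum>x\<in>D 1. \<Sum>y\<in>D 2. k (X x) (X y))"
  define K21 where "K21 = (\<Sum>x\<in>D 2. \<Sum>y\<in>D 1. k (X x) (X y))"
  define K22 where "K22 = (\<Sum>x\<in>D 2. \<Sum>y\<in>D 2. k (X x) (X y))"
  have K21: "K21 = K12" unfolding K21_def K12_def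
    by (subst sum.swap) (rule sum.cong[OF refl], rule sum.cong[OF refl], rule symk)
  define \<delta> where "\<delta> = mmd2 k (emp_dist X (D 1)) (emp_dist X (D 2))"
  have \<delta>_eq: "\<delta> = K11 / n1 / n1 + K22 / n2 / n2 - 2 * (K12 / n1 / n2)"
    unfolding \<delta>_def K11_def K22_def K12_def n1_def n2_def by (rule mmd_emp[OF pd fin])
  have Qeq: "(\<Sum>x\<in>DD. wgt (D 1) (D 2) (1/n1) (-1/n2) x * (\<Sum>y\<in>DD. wgt (D 1) (D 2) (1/n1) (-1/n2) y * k (X x) (X y))) = \<delta>"
  proof -
    have "(\<Sum>x\<in>DD. wgt (D 1) (D 2) (1/n1) (-1/n2) x * (\<Sum>y\<in>DD. wgt (D 1) (D 2) (1/n1) (-1/n2) y * k (X x) (X y)))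
      = 1/n1*(1/n1)*K11 + 1/n1*(-1/n2)*K12 + (-1/n2)*(1/n1)*K21 + (-1/n2)*(-1/n2)*K22"
      unfolding DD_def K11_def K12_def K21_def K22_def by (rule wgt_bil[OF fin disj])
    then show ?thesis by (simp add: \<delta>_eq K21 field_simps)
  qed
  have Qge: "0 \<le> (\<Sum>x\<in>DD. w x * (\<Sum>y\<in>DD. w y * k (X x) (X y)))" for w :: "'o \<Rightarrow> real"
  proof -
    obtain h where h: "bij_betw h {0..<card DD} DD" using ex_bij_betw_nat_finite[OF finDD] by blast
    have all: "\<forall>(n::nat) (c::nat \<Rightarrow> real) (z::nat \<Rightarrow> 'x).
         0 \<le> (\<Sum>i<n. \<Sum>j<n. c i * c j * k (z i) (z j))" using pd unfolding pd_kernel_def by blast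
    have "0 \<le> (\<Sum>i<card DD. \<Sum>j<card DD. w (h i) * w (h j) * k (X (h i)) (X (h j)))"
      using spec[OF spec[OF spec[OF all, of "card DD"], of "\<lambda>i. w (h i)"], of "\<lambda>i. X (h i)"] by simp
    also have "\<dots> = (\<Sum>i<card DD. \<Sum>y\<in>DD. w (h i) * w y * k (X (h i)) (X y))"
    proof (rule sum.cong[OF refl])
      fix i
      show "(\<Sum>j<card DD. w (h i) * w (h j) * k (X (h i)) (X (h j))) = (\<Sum>y\<in>DD. w (h i) * w y * k (X (h i)) (X y))"
        unfolding lessThan_atLeast0 by (rule sum.reindex_bij_betw[OF h])
    qed
    also have "\<dots> = (\<Sum>x\<in>DD. \<Sum>y\<in>DD. w x * w y * k (X x) (X y))"
      unfolding lessThan_atLeast0 by (rule sum.reindex_bij_betw[OF h])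
    also have "\<dots> = (\<Sum>x\<in>DD. w x * (\<Sum>y\<in>DD. w y * k (X x) (X y)))"
      by (simp add: sum_distrib_left mult.assoc)
    finally show ?thesis .
  qed
  have \<delta>pos: "0 < \<delta>"
  proof -
    have "\<delta> \<ge> 0" using Qge[of "wgt (D 1) (D 2) (1/n1) (-1/n2)"] Qeq by simp
    moreover have "\<delta> \<noteq> 0"
    proof
      assume "\<delta> = 0"
      then have "emp_dist X (D 1) = emp_dist X (D 2)"
        using char emp_ps[OF fin(1) ne(1)] emp_ps[OF fin(2) ne(2)]
        unfolding characteristic_kernel_def \<delta>_def by blast
      with distinct show False ..
    qed
    ultimately show ?thesis by simp
  qed
  define om where "om p = distr (point_measure DD (\<lambda>x. ennreal (wgt (D 1) (D 2) (p / n1) ((1 - p) / n2) x))) borel X" for p :: real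
  have mix: "mmd2 k (om p) (om q) = (p - q)^2 * \<delta>" if "0 \<le> p" "p \<le> 1" "0 \<le> q" "q \<le> 1" for p q
  proof -
    have nn: "0 \<le> wgt (D 1) (D 2) (p'/n1) ((1-p')/n2) x" if "0 \<le> p'" "p' \<le> 1" for p' x
      using that by (simp add: wgt_def)
    have "mmd2 k (om p) (om q) =
        (\<Sum>x\<in>DD. wgt (D 1) (D 2) (p / n1) ((1 - p) / n2) x * (\<Sum>y\<in>DD. wgt (D 1) (D 2) (p / n1) ((1 - p) / n2) y * k (X x) (X y)))
      + (\<Sum>x\<in>DD. wgt (D 1) (D 2) (q / n1) ((1 - q) / n2) x * (\<Sum>y\<in>DD. wgt (D 1) (D 2) (q / n1) ((1 - q) / n2) y * k (X x) (X y)))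
      - 2 * (\<Sum>x\<in>DD. wgt (D 1) (D 2) (p / n1) ((1 - p) / n2) x * (\<Sum>y\<in>DD. wgt (D 1) (D 2) (q / n1) ((1 - q) / n2) y * k (X x) (X y)))"
      unfolding om_def by (rule mmd_pm[OF pd finDD _ finDD]) (use nn that in auto)
    also have "\<dots> = (p/n1*(p/n1)*K11 + p/n1*((1-p)/n2)*K12 + (1-p)/n2*(p/n1)*K21 + (1-p)/n2*((1-p)/n2)*K22)
      + (q/n1*(q/n1)*K11 + q/n1*((1-q)/n2)*K12 + (1-q)/n2*(q/n1)*K21 + (1-q)/n2*((1-q)/n2)*K22)
      - 2 * (p/n1*(q/n1)*K11 + p/n1*((1-q)/n2)*K12 + (1-p)/n2*(q/n1)*K21 + (1-p)/n2*((1-q)/n2)*K22)"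
      unfolding DD_def K11_def K12_def K21_def K22_def wgt_bil[OF fin disj] ..
    also have "\<dots> = (p - q)^2 * \<delta>"
      unfolding \<delta>_eq K21 using n1p n2p by (simp add: field_simps power2_eq_square)
    finally show ?thesis .
  qed
  have om_eq: "oracle_mix 2 D X S = om (card (S \<inter> D 1) / card S)" if "S \<subseteq> DD" "S \<noteq> {}" for S
  proof -
    have fS: "finite S" using that finDD finite_subset by blast
    have sp: "0 < card S" using fS that by (simp add: card_gt_0_iff)
    have cS: "card S = card (S \<inter> D 1) + card (S \<inter> D 2)"
    proof -
      have "S = (S \<inter> D 1) \<union> (S \<inter> D 2)" using that(1) unfolding DD_def by blast
      then have "card S = card ((S \<inter> D 1) \<union> (S \<inter> D 2))" by simp
      also have "\<dots> = card (S \<inter> D 1) + card (S \<inter> D 2)" by (rule card_Un_disjoint) (use fin disj in auto)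
      finally show ?thesis .
    qed
    have I2: "{1..2::nat} = {1,2}" by auto
    have U: "(\<Union>i\<in>{1..2::nat}. D i) = DD" unfolding DD_def I2 by auto
    have W: "(\<lambda>ob. ennreal (\<Sum>i\<in>{1..2::nat}. if ob \<in> D i then real (card (S \<inter> D i)) / (real (card S) * real (card (D i))) else 0))
       = (\<lambda>x. ennreal (wgt (D 1) (D 2) ((card (S \<inter> D 1) / card S) / n1) ((1 - card (S \<inter> D 1) / card S) / n2) x))"
    proof
      fix x
      show "ennreal (\<Sum>i\<in>{1..2::nat}. if x \<in> D i then real (card (S \<inter> D i)) / (real (card S) * real (card (D i))) else 0)
         = ennreal (wgt (D 1) (D 2) ((card (S \<inter> D 1) / card S) / n1) ((1 - card (S \<inter> D 1) / card S) / n2) x)"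
      proof (cases "x \<in> D 1")
        case True
        then have "x \<notin> D 2" using disj by blast
        then show ?thesis unfolding I2 using True by (simp add: wgt_def n1_def)
      next
        case False
        show ?thesis
        proof (cases "x \<in> D 2")
          case True
          have "real (card (S \<inter> D 2)) = real (card S) - real (card (S \<inter> D 1))" using cS by simp
          then show ?thesis unfolding I2 using True False sp disj by (simp add: wgt_def n2_def field_simps)
        next
          case F2: False
          then show ?thesis unfolding I2 using False by (simp add: wgt_def)
        qed
      qed
    qed
    show ?thesis unfolding oracle_mix_def om_def U W ..
  qed
  define G where "G a s = s*(N-s)/N*(a/s - (real n1 - a)/(N-s))^2*\<delta>" for a s :: real
  have hdw: "dw S (DD - S) = G (card (S \<inter> D 1)) (card S)" if "S \<subseteq> DD" "S \<noteq> {}" "S \<noteq> DD" for S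
  proof -
    have fS: "finite S" using that finDD finite_subset by blast
    have sp: "0 < card S" using fS that by (simp add: card_gt_0_iff)
    have Tsub: "DD - S \<subseteq> DD" by blast
    have Tne: "DD - S \<noteq> {}" using that by blast
    have cSle: "card S \<le> card DD" using card_mono[OF finDD that(1)] .
    have rT: "real (card (DD - S)) = N - real (card S)"
      using card_Diff_subset[OF fS that(1)] cSle cardDD unfolding N_def by (simp add: of_nat_diff)
    have T1: "(DD - S) \<inter> D 1 = D 1 - (S \<inter> D 1)" unfolding DD_def by blast
    have a1le: "card (S \<inter> D 1) \<le> n1" unfolding n1_def by (rule card_mono[OF fin(1)]) blast
    have cT1: "real (card ((DD - S) \<inter> D 1)) = real n1 - real (card (S \<inter> D 1))"
      unfolding T1 using card_Diff_subset[of "S \<inter> D 1" "D 1"] fin(1) a1le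
      by (simp add: of_nat_diff n1_def finite_subset)
    have ale: "card (S \<inter> D 1) \<le> card S" by (rule card_mono[OF fS]) blast
    have fT: "finite (DD - S)" using finDD by simp
    have tp: "0 < card (DD - S)" using fT Tne by (simp add: card_gt_0_iff)
    have ale2: "card ((DD - S) \<inter> D 1) \<le> card (DD - S)" by (rule card_mono[OF fT]) blast
    have p1: "0 \<le> real (card (S \<inter> D 1)) / real (card S)" "real (card (S \<inter> D 1)) / real (card S) \<le> 1"
      using ale sp by auto
    have p2: "0 \<le> real (card ((DD - S) \<inter> D 1)) / real (card (DD - S))" "real (card ((DD - S) \<inter> D 1)) / real (card (DD - S)) \<le> 1"
      using ale2 tp by auto
    have "dw S (DD - S) = real (card S) * real (card (DD - S)) / (real (card S) + real (card (DD - S)))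
        * mmd2 k (om (card (S \<inter> D 1) / card S)) (om (card ((DD - S) \<inter> D 1) / card (DD - S)))"
      unfolding dw_def dw_star_def om_eq[OF that(1,2)] om_eq[OF Tsub Tne] ..
    also have "\<dots> = G (card (S \<inter> D 1)) (card S)"
      by (subst mix[OF p1 p2], unfold rT cT1) (simp add: G_def)
    finally show ?thesis .
  qed
  have Npos: "N > 0" unfolding N_def using n1p by simp
  have NDD: "real (card DD) = N" unfolding N_def cardDD by simp
  have N2: "N \<ge> 2" unfolding N_def using n1p n2p by linarith
  have GR: "G r r = r * real n2^2 / (N * (N - r)) * \<delta>" if "0 < r" "r < N" for r :: real
    unfolding G_def by (rule G_rr) (use that in \<open>auto simp: N_def\<close>)
  have GR1: "G (r - 1) r = (r * real n2 - N)^2 / (N * r * (N - r)) * \<delta>" if "0 < r" "r < N" for r :: real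
    unfolding G_def by (rule G_r1) (use that in \<open>auto simp: N_def\<close>)
  have GN: "G (real n1) r = real n1^2 * (N - r) / (N * r) * \<delta>" if "0 < r" "r < N" for r :: real
    unfolding G_def by (rule G_n1) (use that in \<open>auto simp: N_def\<close>)
  have single: "dw {c} (DD - {c}) = (if c \<in> D 1 then real n2^2 else real n1^2) * (\<delta> / (N * (N - 1)))"
    if "c \<in> DD" for c
  proof -
    have "{c} \<noteq> DD" using cardDD n1p n2p by (metis One_nat_def add_is_1 card.empty card.insert empty_iff finite.intros(1) less_not_refl2)
    then have h: "dw {c} (DD - {c}) = G (card ({c} \<inter> D 1)) (card {c})" by (rule hdw[rotated 2]) (use that in auto)
    show ?thesis
    proof (cases "c \<in> D 1")
      case True
      then have "{c} \<inter> D 1 = {c}" by auto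
      then show ?thesis using h GR[of 1] N2 True by simp
    next
      case False
      then have "{c} \<inter> D 1 = {}" by auto
      then have "dw {c} (DD - {c}) = G (1 - 1) 1" using h by simp
      also have "\<dots> = (real n2 - N)^2 / (N * (N - 1)) * \<delta>" using GR1[of 1] N2 by simp
      also have "(real n2 - N)^2 = real n1^2" unfolding N_def by (simp add: power2_eq_square)
      finally show ?thesis using False by simp
    qed
  qed
  have pos: "0 < \<delta> / (N * (N - 1))" using \<delta>pos N2 by simp
  have partA: "(\<exists>c\<in>D 1. \<forall>c'\<in>DD. dw {c'} (DD - {c'}) \<le> dw {c} (DD - {c})) \<longleftrightarrow> n1 \<le> n2"
  proof
    assume "\<exists>c\<in>D 1. \<forall>c'\<in>DD. dw {c'} (DD - {c'}) \<le> dw {c} (DD - {c})"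
    then obtain c where c: "c \<in> D 1" "\<forall>c'\<in>DD. dw {c'} (DD - {c'}) \<le> dw {c} (DD - {c})" by blast
    obtain c' where c': "c' \<in> D 2" using ne(2) by blast
    then have c'': "c' \<in> DD" "c' \<notin> D 1" using disj unfolding DD_def by auto
    have cDD: "c \<in> DD" using c unfolding DD_def by simp
    have "real n1^2 * (\<delta> / (N * (N - 1))) \<le> real n2^2 * (\<delta> / (N * (N - 1)))"
      using c(2) c'' single[OF c''(1)] single[OF cDD] c(1) by auto
    then have "real n1^2 \<le> real n2^2" by (rule mult_right_le_imp_le[OF _ pos])
    then have "real n1 \<le> real n2" by (rule power2_le_imp_le) simp
    then show "n1 \<le> n2" by simp
  next
    assume le: "n1 \<le> n2"
    obtain c where c: "c \<in> D 1" using ne(1) by blast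
    have cDD: "c \<in> DD" using c unfolding DD_def by simp
    have sq: "real n1^2 \<le> real n2^2" using le by (simp add: power_mono)
    have "\<forall>c'\<in>DD. dw {c'} (DD - {c'}) \<le> dw {c} (DD - {c})"
    proof
      fix c' assume "c' \<in> DD"
      have m: "real n1^2 * (\<delta> / (N * (N - 1))) \<le> real n2^2 * (\<delta> / (N * (N - 1)))"
        by (rule mult_right_mono[OF sq less_imp_le[OF pos]])
      show "dw {c'} (DD - {c'}) \<le> dw {c} (DD - {c})"
        unfolding single[OF \<open>c' \<in> DD\<close>] single[OF cDD] using c m by simp
    qed
    then show "\<exists>c\<in>D 1. \<forall>c'\<in>DD. dw {c'} (DD - {c'}) \<le> dw {c} (DD - {c})" using c by blast
  qed
  have partB: "\<forall>C1. BS_run dw DD C1 \<longrightarrow> n1 \<le> n2 \<longrightarrow> transferred_from C1 1 (D 1) \<longrightarrow>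
        (\<forall>r\<in>{1..n1}. transferred_from C1 r (D 1))
      \<and> (\<forall>r\<in>{1..n1}. \<forall>r'\<in>{1..n1}. r < r' \<longrightarrow>
            dw (C1 r) (DD - C1 r) < dw (C1 r') (DD - C1 r'))
      \<and> (\<forall>r\<in>{n1..card DD - 1}. \<forall>r'\<in>{n1..card DD - 1}. r < r' \<longrightarrow>
            dw (C1 r') (DD - C1 r') < dw (C1 r) (DD - C1 r))"
  proof (intro allI impI)
    fix C1 assume run: "BS_run dw DD C1" and le: "n1 \<le> n2" and t1: "transferred_from C1 1 (D 1)"
    have C0: "C1 0 = {}" using run unfolding BS_run_def by blast
    have basic: "C1 r \<subseteq> DD \<and> card (C1 r) = r" if "r \<le> card DD - 1" for r
      using bs_basic[OF run finDD that] .
    have n1le: "n1 \<le> card DD - 1" using cardDD n2p by simp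
    have D2DD: "D 2 \<subseteq> DD" unfolding DD_def by blast
    have notD: "\<not> DD \<subseteq> D 1" using ne(2) disj D2DD by blast
    have P: "C1 r \<subseteq> D 1 \<and> transferred_from C1 r (D 1)" if "1 \<le> r" "r \<le> n1" for r
      using that
    proof (induction r)
      case 0 then show ?case by simp
    next
      case (Suc r)
      show ?case
      proof (cases "r = 0")
        case True
        then obtain c where c: "c \<in> D 1" "C1 1 - C1 0 = {c}" using t1 unfolding transferred_from_def by auto
        then have "C1 1 = {c}" using C0 by simp
        then show ?thesis using True t1 c by simp
      next
        case False
        have IH: "C1 r \<subseteq> D 1" using Suc False by simp
        have rle: "Suc r \<in> {1..card DD - 1}" using Suc n1le by simp
        obtain c where c: "c \<in> DD - C1 r" "C1 (Suc r) = insert c (C1 r)"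
          and opt: "\<And>c'. c' \<in> DD - C1 r \<Longrightarrow> dw (insert c' (C1 r)) (DD - insert c' (C1 r))
               \<le> dw (insert c (C1 r)) (DD - insert c (C1 r))"
          using bs_step[OF run rle, unfolded diff_Suc_1] by blast
        have cr: "card (C1 r) = r" using basic[of r] Suc n1le by simp
        have fC: "finite (C1 r)" using IH fin(1) finite_subset by blast
        have "\<not> D 1 \<subseteq> C1 r"
        proof
          assume "D 1 \<subseteq> C1 r"
          then have "n1 \<le> r" using card_mono[OF fC] cr unfolding n1_def by metis
          then show False using Suc by simp
        qed
        then obtain c1 where c1: "c1 \<in> D 1" "c1 \<notin> C1 r" by blast
        have rN: "real (Suc r) < N" using Suc n1le NDD cardDD n2p by simp
        have cD1: "c \<in> D 1"
        proof (rule ccontr)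
          assume nc: "c \<notin> D 1"
          have e1: "dw (insert c1 (C1 r)) (DD - insert c1 (C1 r)) = G (Suc r) (Suc r)"
          proof -
            have sub: "insert c1 (C1 r) \<subseteq> DD" using c1 IH unfolding DD_def by auto
            have ne': "insert c1 (C1 r) \<noteq> DD" using c1 IH notD by auto
            have i1: "insert c1 (C1 r) \<inter> D 1 = insert c1 (C1 r)" using c1 IH by auto
            have ci: "card (insert c1 (C1 r)) = Suc r" using fC c1 cr by simp
            show ?thesis using hdw[OF sub _ ne'] i1 ci by simp
          qed
          have e2: "dw (insert c (C1 r)) (DD - insert c (C1 r)) = G r (Suc r)"
          proof -
            have sub: "insert c (C1 r) \<subseteq> DD" using c IH unfolding DD_def by auto
            have ci: "card (insert c (C1 r)) = Suc r" using fC c cr by simp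
            have ne': "insert c (C1 r) \<noteq> DD" using ci Suc n1le cardDD n2p by auto
            have i1: "insert c (C1 r) \<inter> D 1 = C1 r" using nc IH by auto
            show ?thesis using hdw[OF sub _ ne'] i1 ci cr by simp
          qed
          have "G (Suc r) (Suc r) \<le> G r (Suc r)" using opt[of c1] c1 e1 e2 unfolding DD_def by simp
          moreover have "G r (Suc r) = G (real (Suc r) - 1) (real (Suc r))" by simp
          moreover have "G (real (Suc r) - 1) (real (Suc r)) < G (Suc r) (Suc r)"
          proof -
            have r2: "2 \<le> real (Suc r)" using False by simp
            have r0: "0 < real (Suc r)" by simp
            have "N \<le> 2 * real n2" unfolding N_def using le by simp
            also have "\<dots> < 2 * real (Suc r) * real n2" using r2 n2p by simp
            finally have "N < 2 * real (Suc r) * real n2" .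
            then show ?thesis
              unfolding GR1[OF r0 rN] GR[OF r0 rN]
              using stp[of "real (Suc r)" N \<delta> "real n2"] rN \<delta>pos Npos by simp
          qed
          ultimately show False by simp
        qed
        have "C1 (Suc r) - C1 (Suc r - 1) = {c}" using c by auto
        then show ?thesis using c cD1 IH unfolding transferred_from_def by auto
      qed
    qed
    have dwI: "dw (C1 r) (DD - C1 r) = real r * real n2^2 / (N * (N - real r)) * \<delta>" if "1 \<le> r" "r \<le> n1" for r
    proof -
      have b: "C1 r \<subseteq> DD" "card (C1 r) = r" using basic[of r] that n1le by auto
      have s1: "C1 r \<subseteq> D 1" using P that by blast
      have ne': "C1 r \<noteq> {}" using b that by auto
      have ne'': "C1 r \<noteq> DD" using s1 notD by auto
      have i: "C1 r \<inter> D 1 = C1 r" using s1 by auto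
      have rN: "real r < N" using that n1le NDD cardDD n2p by simp
      show ?thesis using hdw[OF b(1) ne' ne''] i b(2) GR[of "real r"] rN that by simp
    qed
    have CN: "C1 n1 = D 1"
    proof -
      have "C1 n1 \<subseteq> D 1" using P[of n1] n1p by simp
      moreover have "card (C1 n1) = card (D 1)" using basic[of n1] n1le unfolding n1_def by simp
      ultimately show ?thesis using card_subset_eq[OF fin(1)] by blast
    qed
    have dwD: "dw (C1 r) (DD - C1 r) = real n1^2 * (N - real r) / (N * real r) * \<delta>"
      if "n1 \<le> r" "r \<le> card DD - 1" for r
    proof -
      have b: "C1 r \<subseteq> DD" "card (C1 r) = r" using basic[of r] that by auto
      have s1: "D 1 \<subseteq> C1 r" using bs_mono[OF run finDD that] CN by simp
      have ne': "C1 r \<noteq> {}" using s1 ne(1) by auto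
      have ne'': "C1 r \<noteq> DD" using b that cardDD n2p by auto
      have i: "C1 r \<inter> D 1 = D 1" using s1 by auto
      have rN: "real r < N" using that NDD cardDD n2p by simp
      have r0: "0 < real r" using that n1p by simp
      show ?thesis using hdw[OF b(1) ne' ne''] i b(2) GN[OF r0 rN] unfolding n1_def by simp
    qed
    show "(\<forall>r\<in>{1..n1}. transferred_from C1 r (D 1))
      \<and> (\<forall>r\<in>{1..n1}. \<forall>r'\<in>{1..n1}. r < r' \<longrightarrow>
            dw (C1 r) (DD - C1 r) < dw (C1 r') (DD - C1 r'))
      \<and> (\<forall>r\<in>{n1..card DD - 1}. \<forall>r'\<in>{n1..card DD - 1}. r < r' \<longrightarrow>
            dw (C1 r') (DD - C1 r') < dw (C1 r) (DD - C1 r))"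
    proof (intro conjI ballI impI)
      fix r assume "r \<in> {1..n1}"
      then show "transferred_from C1 r (D 1)" using P by simp
    next
      fix r r' assume r: "r \<in> {1..n1}" and r': "r' \<in> {1..n1}" and lt: "r < r'"
      have rN: "real r' < N" using r' n1le NDD cardDD n2p by simp
      show "dw (C1 r) (DD - C1 r) < dw (C1 r') (DD - C1 r')"
        using r r' lt dwI[of r] dwI[of r']
        using inc[of "real r" "real r'" N "real n2" \<delta>] rN n2p \<delta>pos by simp
    next
      fix r r' assume r: "r \<in> {n1..card DD - 1}" and r': "r' \<in> {n1..card DD - 1}" and lt: "r < r'"
      have "r' < n1 + n2" using r' cardDD n2p by auto
      then have "real r' < real (n1 + n2)" by (simp only: of_nat_less_iff)
      then have rN: "real r' < N" unfolding N_def by simp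
      show "dw (C1 r') (DD - C1 r') < dw (C1 r) (DD - C1 r)"
        using r r' lt dwD[of r] dwD[of r']
        using dec[of "real r" "real r'" N "real n1" \<delta>] rN n1p \<delta>pos by simp
    qed
  qed
  show ?thesis using partA partB by blast
qed

end
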